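(* Let $N\ge1$, $\Delta v=1/N$, $v_j=-1+\frac{\Delta v}{2}+(j-1)\Delta v$ for $j=1,\dots,2N$, $v_{j+1/2}=-1+j\Delta v$ for $j=0,\dots,2N$ (so $v_{1/2}=-1$, $v_{2N+1/2}=1$), and $V=(v_1,\dots,v_{2N})^T$. Define $D\in\mathcal{M}_{2N,2N}(\mathbb{R})$ by $$(DF)_j=\frac{1}{\Delta v^2}\Big((1-v_{j+1/2}^2)(F_{j+1}-F_j)-(1-v_{j-1/2}^2)(F_j-F_{j-1})\Big),\quad j=1,\dots,2N,$$ (the terms involving $F_0$ and $F_{2N+1}$ vanish since $1-v_{1/2}^2=1-v_{2N+1/2}^2=0$). Then $D\mathbf{1}=0$ and $DV=-2V$, where $\mathbf{1}=(1,\dots,1)^T$. Moreover $D$ is symmetric, its off-diagonal coefficients are nonnegative, and $I+\delta D$ is a bistochastic matrix for all $\delta>0$ small enough.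
   Context: $D$ is the discretization of the one-dimensional Fokker–Planck operator $\partial_v((1-v^2)\partial_v f)$ on $v\in[-1,1]$. A bistochastic matrix is a matrix with nonnegative entries whose rows and columns each sum to $1$. *)

theory Defs
  imports Complex_Main
begin

text \<open>Square matrices of varying size n are represented as functions
  nat => nat => real, with row/column indices ranging over {1..n}
  (as in the paper); vectors as nat => real indexed by {1..n}.\<close>

definition dv :: "nat \<Rightarrow> real" where
  "dv N = 1 / real N"

definition vc :: "nat \<Rightarrow> nat \<Rightarrow> real" where
  "vc N j = -1 + dv N / 2 + (real j - 1) * dv N"

text \<open>Interfaces: vh N j = v_{j+1/2} = -1 + j dv, j = 0..2N.\<close>
definition vh :: "nat \<Rightarrow> nat \<Rightarrow> real" where
  "vh N j = -1 + real j * dv N"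

text \<open>Entries of the matrix D in M_{2N,2N}(R), read off from
  (DF)_j = ((1 - v_{j+1/2}^2)(F_{j+1}-F_j) - (1 - v_{j-1/2}^2)(F_j - F_{j-1})) / dv^2
  (the terms with F_0, F_{2N+1} have zero coefficient and are dropped).\<close>
definition Dmat :: "nat \<Rightarrow> nat \<Rightarrow> nat \<Rightarrow> real" where
  "Dmat N j k =
    (if j \<in> {1..2*N} \<and> k \<in> {1..2*N} then
       (if k = j + 1 then (1 - (vh N j)\<^sup>2) / (dv N)\<^sup>2
        else if k + 1 = j then (1 - (vh N (j - 1))\<^sup>2) / (dv N)\<^sup>2
        else if k = j then - ((1 - (vh N j)\<^sup>2) + (1 - (vh N (j - 1))\<^sup>2)) / (dv N)\<^sup>2
        else 0)
     else 0)"

definition matvec :: "nat \<Rightarrow> (nat \<Rightarrow> nat \<Rightarrow> real) \<Rightarrow> (nat \<Rightarrow> real) \<Rightarrow> nat \<Rightarrow> real" where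
  "matvec n M x j = (\<Sum>k = 1..n. M j k * x k)"

definition idmat :: "nat \<Rightarrow> nat \<Rightarrow> real" where
  "idmat j k = (if j = k then 1 else 0)"

definition bistochastic :: "nat \<Rightarrow> (nat \<Rightarrow> nat \<Rightarrow> real) \<Rightarrow> bool" where
  "bistochastic n M \<longleftrightarrow>
     (\<forall>i\<in>{1..n}. \<forall>j\<in>{1..n}. 0 \<le> M i j) \<and>
     (\<forall>i\<in>{1..n}. (\<Sum>j = 1..n. M i j) = 1) \<and>
     (\<forall>j\<in>{1..n}. (\<Sum>i = 1..n. M i j) = 1)"

end

theory Submission
  imports Defs
begin

lemma three_sum:
  fixes f :: "nat \<Rightarrow> real"
  assumes "1 \<le> j" "j \<le> n" "\<And>k. k \<notin> {j-1,j,j+1} \<Longrightarrow> f k = 0" "f 0 = 0" "f (n+1) = 0"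
  shows "sum f {1..n} = f (j-1) + f j + f (j+1)"
proof -
  have "sum f {1..n} = sum f {0..n+1}"
  proof (rule sum.mono_neutral_left)
    show "\<forall>i\<in>{0..n + 1} - {1..n}. f i = 0"
    proof
      fix i assume "i \<in> {0..n + 1} - {1..n}"
      hence "i = 0 \<or> i = n+1" by auto
      thus "f i = 0" using assms by auto
    qed
  qed auto
  also have "\<dots> = sum f {j-1,j,j+1}"
    by (rule sum.mono_neutral_right) (use assms in auto)
  also have "\<dots> = f (j-1) + f j + f (j+1)"
  proof -
    have "j - 1 \<notin> {j, j+1}" "j \<notin> {j+1}" using assms by auto
    thus ?thesis by (simp add: add.assoc)
  qed
  finally show ?thesis .
qed

definition AA :: "nat \<Rightarrow> nat \<Rightarrow> real" where
  "AA N j = (1 - (vh N j)\<^sup>2) / (dv N)\<^sup>2"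

lemma AA0: "AA N 0 = 0" by (simp add: AA_def vh_def)
lemma AA2N: "N \<ge> 1 \<Longrightarrow> AA N (2*N) = 0" by (simp add: AA_def vh_def dv_def)

lemma AA_nonneg: assumes "N \<ge> 1" "j \<le> 2*N" shows "0 \<le> AA N j"
proof -
  have "real j \<le> 2 * real N" using assms by linarith
  hence "real j / real N \<le> 2" using assms by (simp add: field_simps)
  moreover have "0 \<le> real j / real N" by simp
  ultimately have "\<bar>vh N j\<bar> \<le> 1" by (simp add: vh_def dv_def abs_le_iff)
  hence "(vh N j)\<^sup>2 \<le> 1" by (simp add: abs_square_le_1)
  thus ?thesis by (simp add: AA_def)
qed

lemma AA_le: assumes "N \<ge> 1" shows "AA N j \<le> real N ^ 2"
proof -
  have "AA N j = (1 - (vh N j)\<^sup>2) * real N ^ 2" by (simp add: AA_def dv_def power_divide)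
  also have "\<dots> \<le> 1 * real N ^ 2" by (rule mult_right_mono) auto
  finally show ?thesis by simp
qed

lemma D_up: "N \<ge> 1 \<Longrightarrow> j \<in> {1..2*N} \<Longrightarrow> Dmat N j (j+1) = AA N j"
  using AA2N[of N] by (cases "j = 2*N") (auto simp: Dmat_def AA_def)
lemma D_dn: "N \<ge> 1 \<Longrightarrow> j \<in> {1..2*N} \<Longrightarrow> Dmat N j (j-1) = AA N (j-1)"
  using AA0[of N] by (cases "j = 1") (auto simp: Dmat_def AA_def)
lemma D_dg: "N \<ge> 1 \<Longrightarrow> j \<in> {1..2*N} \<Longrightarrow> Dmat N j j = - (AA N j + AA N (j-1))"
  by (auto simp: Dmat_def AA_def diff_divide_distrib add_divide_distrib)

lemma rowsum:
  assumes "N \<ge> 1" "j \<in> {1..2*N}"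
  shows "matvec (2*N) (Dmat N) x j = AA N (j-1) * x (j-1) - (AA N j + AA N (j-1)) * x j + AA N j * x (j+1)"
proof -
  have "matvec (2*N) (Dmat N) x j = Dmat N j (j-1) * x (j-1) + Dmat N j j * x j + Dmat N j (j+1) * x (j+1)"
    unfolding matvec_def
    by (rule three_sum[where f="\<lambda>k. Dmat N j k * x k"]) (use assms in \<open>auto simp: Dmat_def\<close>)
  thus ?thesis using D_up[OF assms] D_dn[OF assms] D_dg[OF assms] by (simp add: algebra_simps)
qed

lemma Dsym: "j \<in> {1..2*N} \<Longrightarrow> k \<in> {1..2*N} \<Longrightarrow> Dmat N j k = Dmat N k j"
  by (auto simp: Dmat_def)

lemma Dnonneg: assumes "N \<ge> 1" "j \<in> {1..2*N}" "k \<in> {1..2*N}" "j \<noteq> k" shows "0 \<le> Dmat N j k"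
proof -
  have "0 \<le> AA N j" "0 \<le> AA N (j-1)" using AA_nonneg assms by auto
  thus ?thesis using assms by (auto simp: Dmat_def AA_def)
qed

lemma Vrow:
  assumes "N \<ge> 1" "j \<in> {1..2*N}"
  shows "matvec (2*N) (Dmat N) (vc N) j = -2 * vc N j"
proof -
  have j1: "real (j-1) = real j - 1" using assms by auto
  have N0: "real N > 0" using assms by simp
  have A: "AA N k = 2 * real k * real N - real k ^ 2" for k
    using N0 by (simp add: AA_def vh_def dv_def field_simps power2_eq_square)
  have V: "vc N k = -1 + (real k - 1/2) / real N" for k
    using N0 by (simp add: vc_def dv_def field_simps)
  show ?thesis unfolding rowsum[OF assms] A V j1
    using N0 by (simp add: field_simps power2_eq_square)
qed

theorem proposition4:
  fixes N :: nat
  assumes "N \<ge> 1"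
  shows "(\<forall>j\<in>{1..2*N}. matvec (2*N) (Dmat N) (\<lambda>_. 1) j = 0)
       \<and> (\<forall>j\<in>{1..2*N}. matvec (2*N) (Dmat N) (vc N) j = -2 * vc N j)
       \<and> (\<forall>j\<in>{1..2*N}. \<forall>k\<in>{1..2*N}. Dmat N j k = Dmat N k j)
       \<and> (\<forall>j\<in>{1..2*N}. \<forall>k\<in>{1..2*N}. j \<noteq> k \<longrightarrow> 0 \<le> Dmat N j k)
       \<and> (\<exists>\<delta>0>0. \<forall>\<delta>::real. 0 < \<delta> \<and> \<delta> \<le> \<delta>0 \<longrightarrow>
            bistochastic (2*N) (\<lambda>j k. idmat j k + \<delta> * Dmat N j k))"
proof -
  have R1: "\<forall>j\<in>{1..2*N}. matvec (2*N) (Dmat N) (\<lambda>_. 1) j = 0"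
    using rowsum[OF assms] by simp
  have R1': "\<And>j. j\<in>{1..2*N} \<Longrightarrow> (\<Sum>k = 1..2*N. Dmat N j k) = 0"
    using R1 by (simp add: matvec_def)
  have Iid: "\<And>j. j\<in>{1..2*N} \<Longrightarrow> (\<Sum>k = 1..2*N. idmat j k) = 1"
    by (simp add: idmat_def)
  have Iid': "\<And>j. j\<in>{1..2*N} \<Longrightarrow> (\<Sum>k = 1..2*N. idmat k j) = 1"
    by (simp add: idmat_def)
  define d0 :: real where "d0 = 1 / (2 * real N ^ 2)"
  have d0: "d0 > 0" using assms by (simp add: d0_def)
  have B: "bistochastic (2*N) (\<lambda>j k. idmat j k + \<delta> * Dmat N j k)" if "0 < \<delta>" "\<delta> \<le> d0" for \<delta>
    unfolding bistochastic_def
  proof (intro conjI ballI)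
    fix i j assume i: "i \<in> {1..2*N}" and j: "j \<in> {1..2*N}"
    show "0 \<le> idmat i j + \<delta> * Dmat N i j"
    proof (cases "i = j")
      case False thus ?thesis using Dnonneg[OF assms i j] that by (simp add: idmat_def)
    next
      case True
      have "AA N i + AA N (i-1) \<le> 2 * real N ^ 2" using AA_le[OF assms] by (smt (verit))
      hence "\<delta> * (AA N i + AA N (i-1)) \<le> d0 * (2 * real N ^ 2)"
        using that AA_nonneg[OF assms, of i] AA_nonneg[OF assms, of "i-1"] i
        by (intro mult_mono) auto
      also have "\<dots> = 1" using assms by (simp add: d0_def)
      finally have "\<delta> * Dmat N i i \<ge> -1" unfolding D_dg[OF assms i] by (simp add: algebra_simps)
      thus ?thesis using True by (simp add: idmat_def)
    qed
  next
    fix i assume i: "i \<in> {1..2*N}"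
    show "(\<Sum>j = 1..2*N. idmat i j + \<delta> * Dmat N i j) = 1"
      using R1'[OF i] Iid[OF i] by (simp add: sum.distrib sum_distrib_left[symmetric])
  next
    fix j assume j: "j \<in> {1..2*N}"
    have "(\<Sum>i = 1..2*N. Dmat N i j) = (\<Sum>i = 1..2*N. Dmat N j i)"
      by (rule sum.cong) (use Dsym j in auto)
    thus "(\<Sum>i = 1..2*N. idmat i j + \<delta> * Dmat N i j) = 1"
      using R1'[OF j] Iid'[OF j] by (simp add: sum.distrib sum_distrib_left[symmetric])
  qed
  show ?thesis
    using R1 Vrow[OF assms] Dsym Dnonneg[OF assms] B d0 by blast
qed

end
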